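(* Let $k\ge 3$, constants $c_1\ge\dots\ge c_k>0$ with $\sum c_i=1$, and for $n$ with all $c_in$ integers let $G_n$ be the complete $k$-partite graph with parts $V_1,\dots,V_k$, $|V_i|=c_in$. Let $w_0$ be a uniformly random initial weighting. If $c_i<\tfrac12$, then $$\mathbb{E}(m_i)\le \frac{2c_i}{1-2c_i}.$$
   Context: An initial weighting of a graph on vertex set $V$, $|V|=n$, is a bijection $w_0:V\to\{-n,\dots,-1\}$; here $w_0$ is uniform among all $n!$ such bijections. The quantity $m_i$ is defined by $$m_i=\max\Big\{x\ge 0:\ \exists\, y\ge 0 \text{ with } 2y+x\le n \text{ and } \Big|\bigcup_{j=1}^{2y+x}w_0^{-1}(-j)\cap V_i\Big|=y+x\Big\},$$ equivalently $m_i=\max_{0\le t\le n}X(t)$ where $X(t)=|\{v\in V_i: w_0(v)\ge -t\}|-|\{v\in V\setminus V_i: w_0(v)\ge -t\}|$. A complete $k$-partite graph with parts $V_1,\dots,V_k$ has an edge between $u$ and $v$ iff they lie in different parts. *)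

theory Defs
  imports Complex_Main
begin

text \<open>Initial weightings: bijections from V onto {-n,...,-1}, n = card V
  (fixed to 0 outside V so that the set of weightings is finite, of size n!).\<close>
definition initial_weightings :: "'a set \<Rightarrow> ('a \<Rightarrow> int) set" where
  "initial_weightings V =
     {w. bij_betw w V {- int (card V) .. -1} \<and> (\<forall>v. v \<notin> V \<longrightarrow> w v = 0)}"

definition X_walk :: "'a set \<Rightarrow> 'a set \<Rightarrow> ('a \<Rightarrow> int) \<Rightarrow> nat \<Rightarrow> int" where
  "X_walk V Vi w t =
     int (card {v \<in> Vi. w v \<ge> - int t}) - int (card {v \<in> V - Vi. w v \<ge> - int t})"

definition m_val :: "'a set \<Rightarrow> 'a set \<Rightarrow> ('a \<Rightarrow> int) \<Rightarrow> int" where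
  "m_val V Vi w = Max ((\<lambda>t. X_walk V Vi w t) ` {0..card V})"

definition expected_m :: "'a set \<Rightarrow> 'a set \<Rightarrow> real" where
  "expected_m V Vi =
     (\<Sum>w\<in>initial_weightings V. real_of_int (m_val V Vi w)) / real (card (initial_weightings V))"

end

theory Submission
  imports Defs
begin


definition shift_del :: "'a set \<Rightarrow> 'a \<Rightarrow> ('a \<Rightarrow> int) \<Rightarrow> 'a \<Rightarrow> int" where
  "shift_del V v w = (\<lambda>u. if u = v \<or> u \<notin> V then 0 else w u + 1)"
definition shift_ins :: "'a set \<Rightarrow> 'a \<Rightarrow> ('a \<Rightarrow> int) \<Rightarrow> 'a \<Rightarrow> int" where
  "shift_ins V v w = (\<lambda>u. if u = v then -1 else if u \<in> V then w u - 1 else 0)"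

lemma IW_iff:
  assumes "finite V"
  shows "w \<in> initial_weightings V \<longleftrightarrow> w ` V = {- int (card V)..-1} \<and> (\<forall>u. u \<notin> V \<longrightarrow> w u = 0)"
proof
  assume "w \<in> initial_weightings V" thus "w ` V = {- int (card V)..-1} \<and> (\<forall>u. u \<notin> V \<longrightarrow> w u = 0)"
    by (auto simp: initial_weightings_def bij_betw_def)
next
  assume h: "w ` V = {- int (card V)..-1} \<and> (\<forall>u. u \<notin> V \<longrightarrow> w u = 0)"
  have "card (w ` V) = card V" using h by simp
  hence "inj_on w V" using eq_card_imp_inj_on assms by blast
  thus "w \<in> initial_weightings V" using h by (auto simp: initial_weightings_def bij_betw_def)
qed

lemma IW_inj: "w \<in> initial_weightings V \<Longrightarrow> inj_on w V"
  by (auto simp: initial_weightings_def bij_betw_def)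

lemma IW_range: "w \<in> initial_weightings V \<Longrightarrow> u \<in> V \<Longrightarrow> w u \<in> {- int (card V)..-1}"
  unfolding initial_weightings_def using bij_betwE by blast

lemma IW_out: "w \<in> initial_weightings V \<Longrightarrow> u \<notin> V \<Longrightarrow> w u = 0"
  by (auto simp: initial_weightings_def)

lemma IW_finite: assumes "finite V" shows "finite (initial_weightings V)"
proof -
  have "initial_weightings V \<subseteq> {f. \<forall>x. (x \<in> V \<longrightarrow> f x \<in> {- int (card V)..-1}) \<and> (x \<notin> V \<longrightarrow> f x = 0)}"
  proof
    fix w assume "w \<in> initial_weightings V"
    thus "w \<in> {f. \<forall>x. (x \<in> V \<longrightarrow> f x \<in> {- int (card V)..-1}) \<and> (x \<notin> V \<longrightarrow> f x = 0)}"
      using IW_range[of w V] IW_out[of w V] by simp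
  qed
  thus ?thesis using finite_set_of_finite_funs[OF assms, of "{- int (card V)..-1}" 0] finite_subset by blast
qed

lemma shift_int1: "n \<ge> 1 \<Longrightarrow> (\<lambda>x. x - 1) ` {- int (n-1)..-1} = {- int n..-2}"
proof -
  assume n1: "n \<ge> 1"
  have "(\<lambda>x. x - 1) ` {- int (n-1)..-1} = (\<lambda>x. x + (-1)) ` {- int (n-1)..-1}" by simp
  also have "\<dots> = {- int (n-1) + -1..-1 + -1}" by (rule image_add_atLeastAtMost')
  also have "- int (n-1) + -1 = - int n" using n1 by (simp add: of_nat_diff)
  finally show ?thesis by simp
qed

lemma shift_int2: "n \<ge> 1 \<Longrightarrow> (\<lambda>x. x + 1) ` {- int n..-2} = {- int (n - 1)..-1}"
proof -
  assume n1: "n \<ge> 1"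
  have "(\<lambda>x. x + 1) ` {- int n..-2} = {- int n + 1..-2 + 1}" by (rule image_add_atLeastAtMost')
  also have "- int n + 1 = - int (n-1)" using n1 by (simp add: of_nat_diff)
  finally show ?thesis by simp
qed

lemma ins_in:
  assumes fin: "finite V" and v: "v \<in> V" and w: "w \<in> initial_weightings (V - {v})"
  shows "shift_ins V v w \<in> initial_weightings V"
proof -
  define n where "n = card V"
  have n1: "n \<ge> 1" unfolding n_def using fin v card_gt_0_iff[of V] by auto
  have cV': "card (V - {v}) = n - 1" unfolding n_def using fin v by simp
  have e1: "shift_ins V v w ` (V - {v}) = (\<lambda>x. x - 1) ` (w ` (V - {v}))"
    unfolding image_image by (rule image_cong) (auto simp: shift_ins_def)
  have e2: "w ` (V - {v}) = {- int (n-1)..-1}"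
    using IW_iff[of "V - {v}" w] fin w cV' by auto
  have "shift_ins V v w ` V = shift_ins V v w ` (insert v (V - {v}))" by (simp only: insert_Diff[OF v])
  also have "\<dots> = insert (-1) (shift_ins V v w ` (V - {v}))"
  proof -
    have "shift_ins V v w v = -1" by (simp add: shift_ins_def)
    thus ?thesis by (simp only: image_insert)
  qed
  also have "\<dots> = insert (-1) {- int n..-2}" unfolding e1 e2 shift_int1[OF n1] ..
  also have "\<dots> = {- int n..-1}" using n1 by auto
  finally have "shift_ins V v w ` V = {- int (card V)..-1}" using n_def by simp
  moreover have "\<forall>u. u \<notin> V \<longrightarrow> shift_ins V v w u = 0" using v by (auto simp: shift_ins_def)
  ultimately show ?thesis using IW_iff[OF fin] by blast
qed

lemma del_in:
  assumes fin: "finite V" and v: "v \<in> V" and w: "w \<in> initial_weightings V" and wv: "w v = -1"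
  shows "shift_del V v w \<in> initial_weightings (V - {v})"
proof -
  define n where "n = card V"
  have n1: "n \<ge> 1" unfolding n_def using fin v card_gt_0_iff[of V] by auto
  have cV': "card (V - {v}) = n - 1" unfolding n_def using fin v by simp
  have e1: "shift_del V v w ` (V - {v}) = (\<lambda>x. x + 1) ` (w ` (V - {v}))"
    unfolding image_image by (rule image_cong) (auto simp: shift_del_def)
  have e2: "w ` (V - {v}) = w ` V - w ` {v}"
    by (rule inj_on_image_set_diff[OF IW_inj[OF w]]) (use v in auto)
  have e3: "w ` V = {- int n..-1}" unfolding n_def using IW_iff[OF fin, of w] w by simp
  have e5: "{- int n..-1} - {-1} = {- int n..-2}" by auto
  have e4: "w ` V - w ` {v} = {- int n..-2}" unfolding e3 using wv e5 by simp
  have "shift_del V v w ` (V - {v}) = {- int (n - 1)..-1}"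
    unfolding e1 e2 e4 shift_int2[OF n1] ..
  hence "shift_del V v w ` (V - {v}) = {- int (card (V - {v}))..-1}" using cV' by simp
  moreover have "\<forall>u. u \<notin> V - {v} \<longrightarrow> shift_del V v w u = 0"
    using IW_out[OF w] by (auto simp: shift_del_def)
  moreover have fin': "finite (V - {v})" using fin by simp
  ultimately show ?thesis using IW_iff[OF fin', of "shift_del V v w"] by simp
qed

lemma ins_del: "w \<in> initial_weightings V \<Longrightarrow> w v = -1 \<Longrightarrow> shift_ins V v (shift_del V v w) = w"
proof (rule ext)
  fix u assume w: "w \<in> initial_weightings V" "w v = -1"
  show "shift_ins V v (shift_del V v w) u = w u"
  proof (cases "u \<in> V")
    case False thus ?thesis using IW_out[OF w(1) False] w(2) by (auto simp: shift_ins_def shift_del_def)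
  qed (use w(2) in \<open>auto simp: shift_ins_def shift_del_def\<close>)
qed

lemma del_ins: "w \<in> initial_weightings (V - {v}) \<Longrightarrow> shift_del V v (shift_ins V v w) = w"
proof (rule ext)
  fix u assume w: "w \<in> initial_weightings (V - {v})"
  show "shift_del V v (shift_ins V v w) u = w u"
  proof (cases "u \<in> V - {v}")
    case False thus ?thesis using IW_out[OF w False] by (auto simp: shift_ins_def shift_del_def)
  qed (auto simp: shift_ins_def shift_del_def)
qed

lemma slice_card:
  assumes fin: "finite V" and v: "v \<in> V"
  shows "card {w \<in> initial_weightings V. w v = -1 \<and> Q w}
       = card {w' \<in> initial_weightings (V - {v}). Q (shift_ins V v w')}"
proof -
  have inj: "inj_on (shift_ins V v) {w' \<in> initial_weightings (V - {v}). Q (shift_ins V v w')}"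
  proof (rule inj_on_inverseI[where g = "shift_del V v"])
    fix x assume "x \<in> {w' \<in> initial_weightings (V - {v}). Q (shift_ins V v w')}"
    thus "shift_del V v (shift_ins V v x) = x" using del_ins[of x V v] by simp
  qed
  have "shift_ins V v ` {w' \<in> initial_weightings (V - {v}). Q (shift_ins V v w')}
      = {w \<in> initial_weightings V. w v = -1 \<and> Q w}"
  proof (rule set_eqI, rule iffI)
    fix w assume "w \<in> shift_ins V v ` {w' \<in> initial_weightings (V - {v}). Q (shift_ins V v w')}"
    then obtain w' where h: "w' \<in> initial_weightings (V - {v})" "Q (shift_ins V v w')" "w = shift_ins V v w'" by blast
    have "shift_ins V v w' v = -1" by (simp add: shift_ins_def)
    thus "w \<in> {w \<in> initial_weightings V. w v = -1 \<and> Q w}"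
      using ins_in[OF fin v h(1)] h by simp
  next
    fix w assume "w \<in> {w \<in> initial_weightings V. w v = -1 \<and> Q w}"
    hence w: "w \<in> initial_weightings V" "w v = -1" "Q w" by auto
    show "w \<in> shift_ins V v ` {w' \<in> initial_weightings (V - {v}). Q (shift_ins V v w')}"
    proof (rule image_eqI[where x = "shift_del V v w"])
      show "w = shift_ins V v (shift_del V v w)" using ins_del[OF w(1,2)] by simp
      show "shift_del V v w \<in> {w' \<in> initial_weightings (V - {v}). Q (shift_ins V v w')}"
        using del_in[OF fin v w(1,2)] ins_del[OF w(1,2)] w(3) by simp
    qed
  qed
  thus ?thesis using card_image[OF inj] by simp
qed

lemma decomp_card:
  assumes fin: "finite V" and ne: "V \<noteq> {}"
  shows "card {w \<in> initial_weightings V. Q w} = (\<Sum>v\<in>V. card {w \<in> initial_weightings V. w v = -1 \<and> Q w})"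
proof -
  have "{w \<in> initial_weightings V. Q w} = (\<Union>v\<in>V. {w \<in> initial_weightings V. w v = -1 \<and> Q w})"
  proof (rule set_eqI, rule iffI)
    fix w assume h: "w \<in> {w \<in> initial_weightings V. Q w}"
    have "card V \<ge> 1" using fin ne card_gt_0_iff[of V] by simp
    have hw: "w \<in> initial_weightings V" using h by simp
    moreover have "w ` V = {- int (card V)..-1}" using IW_iff[OF fin, of w] hw by simp
    ultimately have "-1 \<in> w ` V" using \<open>card V \<ge> 1\<close> by simp
    then obtain v where "v \<in> V" "w v = -1" by auto
    thus "w \<in> (\<Union>v\<in>V. {w \<in> initial_weightings V. w v = -1 \<and> Q w})" using h by blast
  qed auto
  also have "card \<dots> = (\<Sum>v\<in>V. card {w \<in> initial_weightings V. w v = -1 \<and> Q w})"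
  proof (rule card_UN_disjoint[OF fin])
    show "\<forall>i\<in>V. finite {w \<in> initial_weightings V. w i = - 1 \<and> Q w}" using IW_finite[OF fin] by simp
    show "\<forall>i\<in>V. \<forall>j\<in>V. i \<noteq> j \<longrightarrow> {w \<in> initial_weightings V. w i = - 1 \<and> Q w} \<inter> {w \<in> initial_weightings V. w j = - 1 \<and> Q w} = {}"
    proof (intro ballI impI)
      fix i j assume ij: "i \<in> V" "j \<in> V" "i \<noteq> j"
      show "{w \<in> initial_weightings V. w i = - 1 \<and> Q w} \<inter> {w \<in> initial_weightings V. w j = - 1 \<and> Q w} = {}"
      proof (rule ccontr)
        assume "\<not> ?thesis"
        then obtain w where w: "w \<in> initial_weightings V" "w i = -1" "w j = -1" by blast
        have "w i = w j" using w by simp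
        hence "i = j" using inj_onD[OF IW_inj[OF w(1)] _ ij(1,2)] by blast
        thus False using ij(3) by simp
      qed
    qed
  qed
  finally show ?thesis .
qed

lemma card_IW: "finite V \<Longrightarrow> card (initial_weightings V) = fact (card V)"
proof (induction "card V" arbitrary: V)
  case 0
  hence "V = {}" by simp
  have "initial_weightings {} = {(\<lambda>_. 0) :: 'a \<Rightarrow> int}"
    by (auto simp: initial_weightings_def bij_betw_def)
  hence "initial_weightings V = {\<lambda>_. 0}" using \<open>V = {}\<close> by simp
  thus ?case using 0 by simp
next
  case (Suc n)
  hence ne: "V \<noteq> {}" by auto
  have "card (initial_weightings V) = card {w \<in> initial_weightings V. True}" by simp
  also have "\<dots> = (\<Sum>v\<in>V. card {w \<in> initial_weightings V. w v = -1 \<and> True})"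
    by (rule decomp_card[OF Suc.prems ne])
  also have "\<dots> = (\<Sum>v\<in>V. fact n)"
  proof (rule sum.cong[OF refl])
    fix v assume v: "v \<in> V"
    have cv: "card (V - {v}) = n" using Suc.hyps(2) Suc.prems v by simp
    have "card {w \<in> initial_weightings V. w v = -1 \<and> True} = card {w' \<in> initial_weightings (V - {v}). True}"
      by (rule slice_card[OF Suc.prems v])
    also have "card {w' \<in> initial_weightings (V - {v}). True} = fact n"
      using Suc.hyps(1)[of "V - {v}", OF cv[symmetric]] Suc.prems cv by simp
    finally show "card {w \<in> initial_weightings V. w v = -1 \<and> True} = fact n" .
  qed
  also have "\<dots> = fact (Suc n)" using Suc.hyps(2)[symmetric] by (simp add: fact_Suc)
  finally show ?case using Suc.hyps(2) by simp
qed


lemma X0: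
  assumes w: "w \<in> initial_weightings V" and sub: "Vi \<subseteq> V"
  shows "X_walk V Vi w 0 = 0"
proof -
  have neg: "\<And>u. u \<in> V \<Longrightarrow> w u \<le> -1" using IW_range[OF w] by simp
  have e1: "{v \<in> Vi. w v \<ge> - int 0} = {}" using neg sub by force
  have e2: "{v \<in> V - Vi. w v \<ge> - int 0} = {}" using neg by force
  show ?thesis unfolding X_walk_def by (simp only: e1 e2 card.empty)
qed

lemma Xsuc:
  assumes fin: "finite V" and v: "v \<in> V" and sub: "Vi \<subseteq> V"
  shows "X_walk V Vi (shift_ins V v w') (Suc t)
       = (if v \<in> Vi then 1 else -1) + X_walk (V - {v}) (Vi - {v}) w' t"
proof -
  define A where "A = {u \<in> Vi - {v}. w' u \<ge> - int t}"
  define B where "B = {u \<in> (V - {v}) - (Vi - {v}). w' u \<ge> - int t}"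
  have fA: "finite A" using fin sub A_def by (auto intro: finite_subset)
  have fB: "finite B" using fin B_def by auto
  have vA: "v \<notin> A" and vB: "v \<notin> B" using A_def B_def by auto
  have key: "\<And>u. u \<in> V \<Longrightarrow> u \<noteq> v \<Longrightarrow> (shift_ins V v w' u \<ge> - int (Suc t)) = (w' u \<ge> - int t)"
    by (auto simp: shift_ins_def)
  have kv: "shift_ins V v w' v \<ge> - int (Suc t)" by (simp add: shift_ins_def)
  have S1: "{u \<in> Vi. shift_ins V v w' u \<ge> - int (Suc t)} = (if v \<in> Vi then insert v A else A)"
    using key kv sub unfolding A_def by auto
  have S2: "{u \<in> V - Vi. shift_ins V v w' u \<ge> - int (Suc t)} = (if v \<in> Vi then B else insert v B)"
    using key kv v unfolding B_def by auto
  have R: "X_walk (V - {v}) (Vi - {v}) w' t = int (card A) - int (card B)"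
    unfolding X_walk_def A_def B_def by (rule refl)
  have L: "X_walk V Vi (shift_ins V v w') (Suc t)
     = int (card (if v \<in> Vi then insert v A else A)) - int (card (if v \<in> Vi then B else insert v B))"
    unfolding X_walk_def S1 S2 by (rule refl)
  show ?thesis unfolding L R using fA fB vA vB by simp
qed

lemma m_rec:
  assumes fin: "finite V" and v: "v \<in> V" and sub: "Vi \<subseteq> V"
    and w': "w' \<in> initial_weightings (V - {v})"
  shows "m_val V Vi (shift_ins V v w')
       = max 0 ((if v \<in> Vi then 1 else -1) + m_val (V - {v}) (Vi - {v}) w')"
proof -
  define s :: int where "s = (if v \<in> Vi then 1 else -1)"
  define n where "n = card (V - {v})"
  have "card V > 0" using fin v card_gt_0_iff by blast
  hence cV: "card V = Suc n" using fin v n_def by simp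
  define X where "X = X_walk V Vi (shift_ins V v w')"
  define X' where "X' = X_walk (V - {v}) (Vi - {v}) w'"
  have x0: "X 0 = 0" unfolding X_def by (rule X0[OF ins_in[OF fin v w'] sub])
  have xs: "\<And>t. X (Suc t) = X' t + s" unfolding X_def X'_def s_def using Xsuc[OF fin v sub] by simp
  have "m_val V Vi (shift_ins V v w') = Max (X ` {0..Suc n})"
    unfolding m_val_def X_def cV ..
  also have "X ` {0..Suc n} = insert 0 ((\<lambda>t. X' t + s) ` {0..n})"
    unfolding atLeast0_atMost_Suc_eq_insert_0 image_insert image_image x0 xs ..
  also have "Max \<dots> = max 0 (Max ((\<lambda>t. X' t + s) ` {0..n}))"
    by (rule Max_insert) auto
  also have "Max ((\<lambda>t. X' t + s) ` {0..n}) = Max (X' ` {0..n}) + s"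
    by (rule Max_add_commute) auto
  also have "Max (X' ` {0..n}) = m_val (V - {v}) (Vi - {v}) w'"
    unfolding m_val_def X'_def n_def ..
  finally show ?thesis unfolding s_def by (simp add: add.commute)
qed

lemma m_le:
  assumes fin: "finite V" and sub: "Vi \<subseteq> V"
  shows "m_val V Vi w \<le> int (card Vi)"
proof -
  have "\<And>t. X_walk V Vi w t \<le> int (card Vi)"
  proof -
    fix t
    have "card {v \<in> Vi. w v \<ge> - int t} \<le> card Vi"
      by (rule card_mono) (use fin sub finite_subset in auto)
    thus "X_walk V Vi w t \<le> int (card Vi)" unfolding X_walk_def by simp
  qed
  thus ?thesis unfolding m_val_def by (subst Max_le_iff) auto
qed


definition NN :: "nat \<Rightarrow> real \<Rightarrow> real" where
  "NN k x = (\<Prod>j<k. x - real j)"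
definition DD :: "nat \<Rightarrow> real \<Rightarrow> real" where
  "DD k y = (\<Prod>j<k. y + 1 + real j)"
definition RR :: "nat \<Rightarrow> real \<Rightarrow> real \<Rightarrow> real" where
  "RR k x y = NN k x / DD k y"

lemma NN_Suc1: "NN (Suc k) x = x * NN k (x - 1)"
  unfolding NN_def prod.lessThan_Suc_shift by (simp add: algebra_simps)

lemma NN_Suc2: "NN (Suc k) x = NN k x * (x - real k)"
  unfolding NN_def by simp

lemma DD_Suc2: "DD (Suc k) y = DD k y * (y + 1 + real k)"
  unfolding DD_def by simp

lemma DD_Suc1: "DD (Suc k) (y - 1) = y * DD k y"
  unfolding DD_def prod.lessThan_Suc_shift by (simp add: algebra_simps)

lemma DD_pos: "y \<ge> 0 \<Longrightarrow> DD k y > 0"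
  unfolding DD_def by (rule prod_pos) auto

lemma NN_zero: "a < k \<Longrightarrow> NN k (real a) = 0"
  unfolding NN_def by (rule prod_zero) (auto intro!: bexI[where x = a])

lemma RR0: "RR 0 x y = 1"
  by (simp add: RR_def NN_def DD_def)

lemma RR_identity:
  assumes y: "y \<ge> 0" and z: "y = 0 \<Longrightarrow> NN (Suc k) x * (x - real (Suc k)) = 0"
  shows "x * RR k (x - 1) y + y * RR (Suc (Suc k)) x (y - 1) = (x + y) * RR (Suc k) x y"
proof -
  let ?r = "Suc k"
  have D: "DD k y > 0" "DD ?r y > 0" using DD_pos y by auto
  have p: "y + 1 + real k > 0" using y by simp
  have p': "y + real ?r > 0" using y by simp
  have t1: "x * RR k (x - 1) y = NN ?r x * (y + real ?r) / DD ?r y"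
  proof -
    have "x * RR k (x - 1) y = (x * NN k (x-1)) / DD k y" by (simp add: RR_def)
    also have "\<dots> = (x * NN k (x-1)) * (y + real ?r) / (DD k y * (y + real ?r))"
      using D p' by simp
    also have "\<dots> = NN ?r x * (y + real ?r) / DD ?r y" by (simp add: NN_Suc1 DD_Suc2 add_ac)
    finally show ?thesis .
  qed
  have t2: "y * RR (Suc ?r) x (y - 1) = NN ?r x * (x - real ?r) / DD ?r y"
  proof (cases "y = 0")
    case True thus ?thesis using z by simp
  next
    case False
    have "y * RR (Suc ?r) x (y - 1) = y * (NN ?r x * (x - real ?r)) / (y * DD ?r y)"
      by (simp add: RR_def NN_Suc2[of ?r] DD_Suc1)
    also have "\<dots> = NN ?r x * (x - real ?r) / DD ?r y" using False by simp
    finally show ?thesis .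
  qed
  have "x * RR k (x - 1) y + y * RR (Suc ?r) x (y - 1)
      = NN ?r x * (y + real ?r) / DD ?r y + NN ?r x * (x - real ?r) / DD ?r y"
    using t1 t2 by simp
  also have "\<dots> = (NN ?r x * (y + real ?r) + NN ?r x * (x - real ?r)) / DD ?r y"
    by (rule add_divide_distrib[symmetric])
  also have "\<dots> = (x + y) * RR ?r x y" by (simp add: RR_def algebra_simps)
  finally show ?thesis .
qed

lemma RR_le:
  assumes ab: "a \<le> b"
  shows "RR k (real a) (real b) \<le> (real a / (real b + 1)) ^ k"
proof (cases "a < k")
  case True thus ?thesis by (simp add: RR_def NN_zero)
next
  case False
  have "RR k (real a) (real b) = (\<Prod>j<k. (real a - real j) / (real b + 1 + real j))"
    unfolding RR_def NN_def DD_def by (simp add: prod_dividef)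
  also have "\<dots> \<le> (\<Prod>j<k. real a / (real b + 1))"
  proof (rule prod_mono)
    fix j assume "j \<in> {..<k}"
    hence j: "j \<le> a" using False by auto
    show "0 \<le> (real a - real j) / (real b + 1 + real j) \<and>
          (real a - real j) / (real b + 1 + real j) \<le> real a / (real b + 1)"
    proof
      show "0 \<le> (real a - real j) / (real b + 1 + real j)" using j by simp
      show "(real a - real j) / (real b + 1 + real j) \<le> real a / (real b + 1)"
        using j by (simp add: divide_simps) (simp add: algebra_simps mult_nonneg_nonneg)
    qed
  qed
  finally show ?thesis by simp
qed


lemma cnt_r0:
  assumes fin: "finite V"
  shows "real (card {w \<in> initial_weightings V. Q w}) \<le> fact (card V)"
proof -
  have "card {w \<in> initial_weightings V. Q w} \<le> card (initial_weightings V)"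
    by (rule card_mono) (use IW_finite[OF fin] in auto)
  thus ?thesis using card_IW[OF fin] by (metis of_nat_fact of_nat_le_iff)
qed

lemma slice_cnt:
  assumes fin: "finite V" and v: "v \<in> V" and sub: "Vi \<subseteq> V"
  shows "card {w \<in> initial_weightings V. w v = -1 \<and> int (Suc k) \<le> m_val V Vi w}
       = (if v \<in> Vi then card {w' \<in> initial_weightings (V - {v}). int k \<le> m_val (V - {v}) (Vi - {v}) w'}
          else card {w' \<in> initial_weightings (V - {v}). int (Suc (Suc k)) \<le> m_val (V - {v}) (Vi - {v}) w'})"
proof -
  have "card {w \<in> initial_weightings V. w v = -1 \<and> int (Suc k) \<le> m_val V Vi w}
     = card {w' \<in> initial_weightings (V - {v}). int (Suc k) \<le> m_val V Vi (shift_ins V v w')}"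
    by (rule slice_card[OF fin v])
  also have "{w' \<in> initial_weightings (V - {v}). int (Suc k) \<le> m_val V Vi (shift_ins V v w')}
     = (if v \<in> Vi then {w' \<in> initial_weightings (V - {v}). int k \<le> m_val (V - {v}) (Vi - {v}) w'}
          else {w' \<in> initial_weightings (V - {v}). int (Suc (Suc k)) \<le> m_val (V - {v}) (Vi - {v}) w'})"
    using m_rec[OF fin v sub] by auto
  finally show ?thesis by simp
qed

lemma cnt_bound:
  "finite V \<Longrightarrow> Vi \<subseteq> V \<Longrightarrow> card V = n \<Longrightarrow> card Vi \<le> r + (card V - card Vi) \<Longrightarrow>
   real (card {w \<in> initial_weightings V. int r \<le> m_val V Vi w})
     \<le> fact n * RR r (real (card Vi)) (real (card V - card Vi))"
proof (induction n arbitrary: V Vi r)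
  case 0
  show ?case
  proof (cases r)
    case 0 thus ?thesis using cnt_r0[OF "0.prems"(1)] "0.prems"(3) by (simp add: RR0)
  next
    case (Suc k)
    have "card Vi = 0" using "0.prems" card_mono by (metis le_zero_eq)
    have nm: "\<not> int r \<le> m_val V Vi w" for w
    proof -
      have "m_val V Vi w \<le> 0" using m_le[OF "0.prems"(1,2), of w] \<open>card Vi = 0\<close> by simp
      thus ?thesis using Suc by simp
    qed
    hence e: "{w \<in> initial_weightings V. int r \<le> m_val V Vi w} = {}" by blast
    have e2: "RR r (real (card Vi)) (real (card V - card Vi)) = 0"
      using \<open>card Vi = 0\<close> Suc NN_zero[of 0 r] by (simp add: RR_def)
    show ?thesis unfolding e e2 by simp
  qed
next
  case (Suc n)
  note fin = Suc.prems(1) and sub = Suc.prems(2) and cV = Suc.prems(3) and cond = Suc.prems(4)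
  define a where "a = card Vi"
  define b where "b = card V - card Vi"
  have aleV: "a \<le> card V" unfolding a_def using card_mono[OF fin sub] .
  have ab: "a + b = Suc n" using aleV cV unfolding a_def b_def by simp
  show ?case
  proof (cases r)
    case 0 thus ?thesis using cnt_r0[OF fin] cV by (simp add: RR0)
  next
    case (Suc k)
    have ne: "V \<noteq> {}" using cV by auto
    define A where "A = fact n * RR k (real a - 1) (real b)"
    define B where "B = fact n * RR (Suc (Suc k)) (real a) (real b - 1)"
    have each: "real (card {w \<in> initial_weightings V. w v = -1 \<and> int (Suc k) \<le> m_val V Vi w})
        \<le> (if v \<in> Vi then A else B)" if v: "v \<in> V" for v
    proof -
      have finv: "finite (V - {v})" using fin by simp
      have subv: "Vi - {v} \<subseteq> V - {v}" using sub by auto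
      have cVv: "card (V - {v}) = n" using cV fin v by simp
      show ?thesis
      proof (cases "v \<in> Vi")
        case True
        have ca: "card (Vi - {v}) = a - 1" unfolding a_def using True fin sub finite_subset by (simp add: card_Diff_singleton)
        have a1: "a \<ge> 1" unfolding a_def using True fin sub finite_subset card_gt_0_iff
          by (metis One_nat_def Suc_leI empty_iff)
        have cb: "card (V - {v}) - card (Vi - {v}) = b" using ca cVv ab a1 by simp
        have "real (card {w' \<in> initial_weightings (V - {v}). int k \<le> m_val (V - {v}) (Vi - {v}) w'})
           \<le> fact n * RR k (real (card (Vi - {v}))) (real (card (V - {v}) - card (Vi - {v})))"
          by (rule Suc.IH[OF finv subv cVv]) (use ca cb cond Suc a_def b_def in simp)
        also have "\<dots> = A"
        proof -
          have "real (card (Vi - {v})) = real a - 1" using ca a1 by (simp add: of_nat_diff)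
          thus ?thesis unfolding A_def cb by simp
        qed
        finally show ?thesis using slice_cnt[OF fin v sub, of k] True by simp
      next
        case False
        have ca: "card (Vi - {v}) = a" unfolding a_def using False by simp
        have b1: "b \<ge> 1" using ab aleV cVv ca card_mono[OF finv subv] by simp
        have cb: "card (V - {v}) - card (Vi - {v}) = b - 1" using ca cVv ab by simp
        have "real (card {w' \<in> initial_weightings (V - {v}). int (Suc (Suc k)) \<le> m_val (V - {v}) (Vi - {v}) w'})
           \<le> fact n * RR (Suc (Suc k)) (real (card (Vi - {v}))) (real (card (V - {v}) - card (Vi - {v})))"
          by (rule Suc.IH[OF finv subv cVv]) (use ca cb cond Suc a_def b_def b1 in simp)
        also have "\<dots> = B"
        proof -
          have "real (card (V - {v}) - card (Vi - {v})) = real b - 1" using cb b1 by (simp add: of_nat_diff)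
          thus ?thesis unfolding B_def ca by simp
        qed
        finally show ?thesis using slice_cnt[OF fin v sub, of k] False by simp
      qed
    qed
    have "real (card {w \<in> initial_weightings V. int r \<le> m_val V Vi w})
        = (\<Sum>v\<in>V. real (card {w \<in> initial_weightings V. w v = -1 \<and> int (Suc k) \<le> m_val V Vi w}))"
    proof -
      have "card {w \<in> initial_weightings V. int r \<le> m_val V Vi w}
          = (\<Sum>v\<in>V. card {w \<in> initial_weightings V. w v = -1 \<and> int (Suc k) \<le> m_val V Vi w})"
        unfolding Suc by (rule decomp_card[OF fin ne])
      thus ?thesis by (simp only: of_nat_sum)
    qed
    also have "\<dots> \<le> (\<Sum>v\<in>V. if v \<in> Vi then A else B)"
      by (rule sum_mono) (rule each)
    also have "\<dots> = real a * A + real b * B"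
    proof -
      have "(\<Sum>v\<in>V. if v \<in> Vi then A else B) = (\<Sum>v\<in>V \<inter> {x. x \<in> Vi}. A) + (\<Sum>v\<in>V \<inter> - {x. x \<in> Vi}. B)"
        by (rule sum.If_cases[OF fin])
      moreover have "V \<inter> {x. x \<in> Vi} = Vi" using sub by auto
      moreover have "V \<inter> - {x. x \<in> Vi} = V - Vi" by auto
      moreover have "card (V - Vi) = b" unfolding b_def using card_Diff_subset[OF finite_subset[OF sub fin] sub] .
      ultimately show ?thesis unfolding a_def by simp
    qed
    also have "\<dots> = fact n * (real a * RR k (real a - 1) (real b) + real b * RR (Suc (Suc k)) (real a) (real b - 1))"
      unfolding A_def B_def by (simp add: algebra_simps)
    also have "\<dots> = fact n * ((real a + real b) * RR (Suc k) (real a) (real b))"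
    proof -
      have z: "NN (Suc k) (real a) * (real a - real (Suc k)) = 0" if "real b = 0"
      proof -
        have "a \<le> Suc k" using cond that Suc unfolding a_def b_def by simp
        thus ?thesis
        proof (cases "a < Suc k")
          case True thus ?thesis using NN_zero by simp
        next
          case False thus ?thesis using \<open>a \<le> Suc k\<close> by simp
        qed
      qed
      have "real a * RR k (real a - 1) (real b) + real b * RR (Suc (Suc k)) (real a) (real b - 1)
          = (real a + real b) * RR (Suc k) (real a) (real b)"
        by (rule RR_identity[OF _ z]) simp_all
      thus ?thesis by (simp only:)
    qed
    also have "\<dots> = fact (Suc n) * RR r (real (card Vi)) (real (card V - card Vi))"
    proof -
      have "real a + real b = real (Suc n)" using ab by (metis of_nat_add)
      thus ?thesis unfolding Suc a_def b_def by (simp add: fact_Suc)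
    qed
    finally show ?thesis .
  qed
qed


lemma pointwise_ind:
  fixes m :: int
  assumes "m \<le> int n"
  shows "real_of_int m \<le> (\<Sum>r\<in>{1..n}. if int r \<le> m then 1 else 0 :: real)"
proof (cases "m \<le> 0")
  case True
  have "0 \<le> (\<Sum>r\<in>{1..n}. if int r \<le> m then 1 else 0 :: real)" by (rule sum_nonneg) simp
  thus ?thesis using True by simp
next
  case False
  have "(\<Sum>r\<in>{1..n}. if int r \<le> m then 1 else 0 :: real) = (\<Sum>r\<in>{r \<in> {1..n}. int r \<le> m}. 1)"
    by (rule sum.inter_filter[symmetric]) simp
  also have "{r \<in> {1..n}. int r \<le> m} = {1..nat m}" using assms False by auto
  finally show ?thesis using False by simp
qed

lemma exp_bound:
  assumes fin: "finite V" and sub: "Vi \<subseteq> V" and ab: "card Vi \<le> card V - card Vi"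
  shows "expected_m V Vi \<le> (\<Sum>r\<in>{1..card V}. RR r (real (card Vi)) (real (card V - card Vi)))"
proof -
  define n where "n = card V"
  define I where "I = initial_weightings V"
  define R where "R = (\<lambda>r. RR r (real (card Vi)) (real (card V - card Vi)))"
  have fI: "finite I" unfolding I_def by (rule IW_finite[OF fin])
  have cI: "real (card I) = fact n" unfolding I_def n_def using card_IW[OF fin] by (metis of_nat_fact)
  have "(\<Sum>w\<in>I. real_of_int (m_val V Vi w))
      \<le> (\<Sum>w\<in>I. \<Sum>r\<in>{1..n}. if int r \<le> m_val V Vi w then 1 else 0 :: real)"
  proof (rule sum_mono)
    fix w
    have "m_val V Vi w \<le> int n"
      using m_le[OF fin sub, of w] card_mono[OF fin sub] unfolding n_def by simp
    thus "real_of_int (m_val V Vi w) \<le> (\<Sum>r\<in>{1..n}. if int r \<le> m_val V Vi w then 1 else 0 :: real)"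
      by (rule pointwise_ind)
  qed
  also have "\<dots> = (\<Sum>r\<in>{1..n}. \<Sum>w\<in>I. if int r \<le> m_val V Vi w then 1 else 0 :: real)"
    by (rule sum.swap)
  also have "\<dots> = (\<Sum>r\<in>{1..n}. real (card {w \<in> I. int r \<le> m_val V Vi w}))"
  proof (rule sum.cong[OF refl])
    fix r
    have "(\<Sum>w\<in>I. if int r \<le> m_val V Vi w then 1 else 0 :: real) = (\<Sum>w\<in>{w \<in> I. int r \<le> m_val V Vi w}. 1)"
      by (rule sum.inter_filter[symmetric, OF fI])
    thus "(\<Sum>w\<in>I. if int r \<le> m_val V Vi w then 1 else 0 :: real) = real (card {w \<in> I. int r \<le> m_val V Vi w})"
      by simp
  qed
  also have "\<dots> \<le> (\<Sum>r\<in>{1..n}. fact n * R r)"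
  proof (rule sum_mono)
    fix r assume "r \<in> {1..n}"
    show "real (card {w \<in> I. int r \<le> m_val V Vi w}) \<le> fact n * R r"
      unfolding I_def R_def by (rule cnt_bound[OF fin sub n_def[symmetric]]) (use ab in simp)
  qed
  also have "\<dots> = fact n * (\<Sum>r\<in>{1..n}. R r)" by (simp add: sum_distrib_left)
  finally have S: "(\<Sum>w\<in>I. real_of_int (m_val V Vi w)) \<le> fact n * (\<Sum>r\<in>{1..n}. R r)" .
  have "expected_m V Vi = (\<Sum>w\<in>I. real_of_int (m_val V Vi w)) / fact n"
    unfolding expected_m_def I_def[symmetric] cI ..
  also have "\<dots> \<le> (\<Sum>r\<in>{1..n}. R r)"
    using S by (simp add: divide_le_eq mult.commute)
  finally show ?thesis unfolding R_def n_def .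
qed

lemma geom_bound:
  fixes q :: real
  assumes "0 \<le> q" "q < 1"
  shows "(\<Sum>r\<in>{1..n}. q ^ r) \<le> q / (1 - q)"
proof -
  have eq: "(1 - q) * (\<Sum>r\<in>{1..n}. q ^ r) = q - q ^ Suc n"
  proof (induction n)
    case 0 thus ?case by simp
  next
    case (Suc n)
    have "(\<Sum>r\<in>{1..Suc n}. q ^ r) = (\<Sum>r\<in>{1..n}. q ^ r) + q ^ Suc n" by simp
    hence "(1 - q) * (\<Sum>r\<in>{1..Suc n}. q ^ r) = (1 - q) * (\<Sum>r\<in>{1..n}. q ^ r) + (1 - q) * q ^ Suc n"
      by (simp add: algebra_simps)
    also have "\<dots> = q - q ^ Suc n + (1 - q) * q ^ Suc n" using Suc.IH by simp
    also have "\<dots> = q - q ^ Suc (Suc n)" by (simp add: algebra_simps)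
    finally show ?case .
  qed
  have "(\<Sum>r\<in>{1..n}. q ^ r) = (q - q ^ Suc n) / (1 - q)"
    using eq assms by (simp add: field_simps)
  also have "\<dots> \<le> q / (1 - q)"
    using assms by (simp add: divide_right_mono)
  finally show ?thesis .
qed

theorem lemma2:
  fixes k n i :: nat and c :: "nat \<Rightarrow> real" and V :: "'a set"
    and P :: "nat \<Rightarrow> 'a set" and E :: "'a \<Rightarrow> 'a \<Rightarrow> bool"
  assumes k3: "k \<ge> 3"
    and c_mono: "\<forall>j\<in>{1..<k}. c (Suc j) \<le> c j"
    and c_pos: "\<forall>j\<in>{1..k}. c j > 0"
    and c_sum: "(\<Sum>j=1..k. c j) = 1"
    and c_int: "\<forall>j\<in>{1..k}. c j * real n \<in> \<int>"
    and V_fin: "finite V" and V_card: "card V = n"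
    and P_sub: "\<forall>j\<in>{1..k}. P j \<subseteq> V"
    and P_disj: "\<forall>j\<in>{1..k}. \<forall>l\<in>{1..k}. j \<noteq> l \<longrightarrow> P j \<inter> P l = {}"
    and P_cover: "(\<Union>j\<in>{1..k}. P j) = V"
    and P_card: "\<forall>j\<in>{1..k}. real (card (P j)) = c j * real n"
    and E_def: "\<forall>u v. E u v \<longleftrightarrow>
                  (\<exists>j\<in>{1..k}. \<exists>l\<in>{1..k}. j \<noteq> l \<and> u \<in> P j \<and> v \<in> P l)"
    and i_range: "i \<in> {1..k}"
    and ci_half: "c i < 1/2"
  shows "expected_m V (P i) \<le> 2 * c i / (1 - 2 * c i)"
proof -
  define a where "a = card (P i)"
  define b where "b = n - a"
  have sub: "P i \<subseteq> V" using P_sub i_range by blast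
  have ra: "real a = c i * real n" unfolding a_def using P_card i_range by blast
  have ci0: "c i > 0" using c_pos i_range by blast
  have aln: "a \<le> n" unfolding a_def V_card[symmetric] using card_mono[OF V_fin sub] .
  have rb: "real b = real n - real a" unfolding b_def using aln by (simp add: of_nat_diff)
  have rhs_pos: "2 * c i / (1 - 2 * c i) \<ge> 0" using ci0 ci_half by simp
  have "c i * real n \<le> 1/2 * real n" using ci_half by (intro mult_right_mono) auto
  hence "real a \<le> real b" using ra rb by linarith
  hence ab: "a \<le> b" by simp
  have E: "expected_m V (P i) \<le> (\<Sum>r\<in>{1..n}. RR r (real a) (real b))"
    using exp_bound[OF V_fin sub] ab unfolding a_def b_def V_card by simp
  show ?thesis
  proof (cases "n = 0")
    case True thus ?thesis using E rhs_pos by simp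
  next
    case False
    hence npos: "real n > 0" by simp
    have "c i * real n < 1/2 * real n" using ci_half npos by (intro mult_strict_right_mono) auto
    hence alb: "real a < real b" using ra rb by linarith
    define q where "q = real a / (real b + 1)"
    have q0: "0 \<le> q" unfolding q_def by simp
    have q1: "q < 1" unfolding q_def using alb by simp
    have "(\<Sum>r\<in>{1..n}. RR r (real a) (real b)) \<le> (\<Sum>r\<in>{1..n}. q ^ r)"
      by (rule sum_mono) (use RR_le[OF ab] q_def in simp)
    also have "\<dots> \<le> q / (1 - q)" by (rule geom_bound[OF q0 q1])
    also have "q / (1 - q) = real a / (real b + 1 - real a)"
    proof -
      have d: "real b + 1 > 0" by simp
      have "1 - q = (real b + 1 - real a) / (real b + 1)" unfolding q_def using d by (simp add: field_simps)
      hence "q / (1 - q) = (real a / (real b + 1)) / ((real b + 1 - real a) / (real b + 1))"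
        unfolding q_def by simp
      also have "\<dots> = real a / (real b + 1 - real a)" using d by simp
      finally show ?thesis .
    qed
    also have "\<dots> \<le> 2 * real a / (real b - real a)"
    proof -
      have "real a / (real b + 1 - real a) \<le> real a / (real b - real a)"
        using alb by (simp add: frac_le)
      also have "\<dots> \<le> 2 * real a / (real b - real a)"
        using alb by (simp add: divide_right_mono)
      finally show ?thesis .
    qed
    also have "2 * real a / (real b - real a) = 2 * c i / (1 - 2 * c i)"
    proof -
      have "real b - real a = real n * (1 - 2 * c i)" using ra rb by (simp add: algebra_simps)
      moreover have "2 * real a = real n * (2 * c i)" using ra by simp
      ultimately show ?thesis using npos by simp
    qed
    finally show ?thesis using E by simp
  qed
qed

end
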